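(* Let $G=(V,E)$ be a network and consider an $\mathbb{F}_q$-valued rate-$\omega$ LNEC code on $G$, as in the context. Let $t\in T$ be a sink node with $\dim\Phi(t)=\omega$, and let $r$ be a nonnegative integer with $r\le C_t$. Then the code corrects at $t$ any error vector in $\mathcal{Z}(\mathcal{A}_t(r))$ if and only if it corrects at $t$ any error vector in $\mathcal{Z}(\mathcal{E}_t(r))$.
   Context: Network: $G=(V,E)$ is a finite directed acyclic graph (parallel edges allowed) with a single source node $s$ and a set of sink nodes $T\subseteq V\setminus\{s\}$; $s$ has no incoming edges and sink nodes have no outgoing edges. For an edge $e$, $\mathrm{tail}(e)$, $\mathrm{head}(e)$ are its tail and head; $\mathrm{In}(v)$, $\mathrm{Out}(v)$ are the incoming/outgoing edge sets of node $v$. A directed path is a sequence of edges $(e_1,\dots,e_m)$, $m\ge1$, with $\mathrm{tail}(e_{k+1})=\mathrm{head}(e_k)$. A cut separating node $v$ from node $u$ is a set of edges whose removal leaves no directed path from $u$ to $v$; $C_t$ is the minimum size of a cut separating sink $t$ from $s$. LNEC code: with rate $\omega\ge1$ and finite field $\mathbb{F}_q$, introduce imaginary source edges $d_1',\dots,d_\omega'$ ending at $s$ with $\mathrm{In}(s)=\{d_1',\dots,d_\omega'\}$, and for each $e\in E$ an imaginary error edge $e'$ with head $\mathrm{tail}(e)$; $E'=\{e':e\in E\}$ (for non-source nodes, $\mathrm{In}(v)$ contains only edges of $E$). The code is given by local encoding coefficients $k_{d,e}\in\mathbb{F}_q$ for $e\in E$, $d\in\mathrm{In}(\mathrm{tail}(e))$.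 Extended global encoding kernels are vectors in $\mathbb{F}_q^{\omega+|E|}$ indexed by $\{d_i'\}\cup E'$: $\tilde f_{d_i'}=1_{d_i'}$, $\tilde f_{e'}=1_{e'}$ (standard basis vectors), and recursively in topological order $\tilde f_e=\sum_{d\in\mathrm{In}(\mathrm{tail}(e))}k_{d,e}\tilde f_d+1_{e'}$. For sink $t$, $\mathrm{row}_t(d')=(\tilde f_{\hat e}(d'):\hat e\in\mathrm{In}(t))$, and $\Phi(t)=\langle\mathrm{row}_t(d_i'):1\le i\le\omega\rangle$. Error correction: an error vector $z=(z_e:e\in E)\in\mathbb{F}_q^{|E|}$ matches $\xi\subseteq E$ if $z_e=0$ for all $e\notin\xi$. For a source message $x\in\mathbb{F}_q^\omega$ and error vector $z$, the received vector at $t$ is $\tilde y_t(x,z)=(x\ z)\cdot\tilde F_t$ where $\tilde F_t=[\tilde f_e:e\in\mathrm{In}(t)]$. For a set $\mathcal{Z}$ of error vectors, the code corrects at $t$ any error vector in $\mathcal{Z}$ if for all $x,x'\in\mathbb{F}_q^\omega$ and $z,z'\in\mathcal{Z}$, $\tilde y_t(x,z)=\tilde y_t(x',z')$ implies $x=x'$. For a collection $\mathcal{C}$ of edge subsets, $\mathcal{Z}(\mathcal{C})=\{z\in\mathbb{F}_q^{|E|}: z\text{ matches some }\xi\in\mathcal{C}\}$. Graph notions: for $\xi\subseteq E$ and a node $u$, $A\subseteq E$ is a cut separating $u$ from $\xi$ if every directed path in $G$ whose first edge lies in $\xi$ and whose last edge has head $u$ contains an edge of $A$. $\mathrm{mincut}(\xi,u)$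 is the minimum size of such a cut. A minimum cut separating $u$ from $\xi$ is primary if it separates $u$ from every minimum cut separating $u$ from $\xi$; it exists and is unique. $\xi$ is primary for $u$ if $\xi$ is the primary minimum cut separating $u$ from $\xi$. $\mathcal{E}_t(r)=\{\xi\subseteq E:\mathrm{mincut}(\xi,t)\le r\}$, $\mathcal{A}_t(r)=\{\xi\subseteq E:|\xi|=r,\ \xi\text{ primary for }t\}$. *)

theory Defs
  imports Complex_Main "HOL-Library.Function_Algebras"
begin

text \<open>A network: node set V, edge set E (edges are abstract objects, so parallel
edges are allowed), tail/head maps, source s, sink set T.\<close>

definition is_path :: "'e set \<Rightarrow> ('e \<Rightarrow> 'v) \<Rightarrow> ('e \<Rightarrow> 'v) \<Rightarrow> 'e list \<Rightarrow> bool" where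
  "is_path E tail head p \<longleftrightarrow>
     p \<noteq> [] \<and> set p \<subseteq> E \<and> (\<forall>i. Suc i < length p \<longrightarrow> tail (p ! Suc i) = head (p ! i))"

definition network :: "'v set \<Rightarrow> 'e set \<Rightarrow> ('e \<Rightarrow> 'v) \<Rightarrow> ('e \<Rightarrow> 'v) \<Rightarrow> 'v \<Rightarrow> 'v set \<Rightarrow> bool" where
  "network V E tail head s T \<longleftrightarrow>
     finite V \<and> finite E \<and> (\<forall>e\<in>E. tail e \<in> V \<and> head e \<in> V) \<and>
     s \<in> V \<and> T \<subseteq> V - {s} \<and>
     (\<forall>e\<in>E. head e \<noteq> s) \<and> (\<forall>e\<in>E. tail e \<notin> T) \<and>
     (\<forall>p. is_path E tail head p \<longrightarrow> head (last p) \<noteq> tail (hd p))"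

definition node_cut :: "'e set \<Rightarrow> ('e \<Rightarrow> 'v) \<Rightarrow> ('e \<Rightarrow> 'v) \<Rightarrow> 'e set \<Rightarrow> 'v \<Rightarrow> 'v \<Rightarrow> bool" where
  "node_cut E tail head A v u \<longleftrightarrow> A \<subseteq> E \<and>
     (\<forall>p. is_path E tail head p \<and> tail (hd p) = u \<and> head (last p) = v \<longrightarrow> set p \<inter> A \<noteq> {})"

text \<open>C_t: minimum size of a cut separating sink t from s.\<close>
definition maxflow :: "'e set \<Rightarrow> ('e \<Rightarrow> 'v) \<Rightarrow> ('e \<Rightarrow> 'v) \<Rightarrow> 'v \<Rightarrow> 'v \<Rightarrow> nat" where
  "maxflow E tail head s t = Min {card A | A. node_cut E tail head A t s}"

definition edge_cut :: "'e set \<Rightarrow> ('e \<Rightarrow> 'v) \<Rightarrow> ('e \<Rightarrow> 'v) \<Rightarrow> 'e set \<Rightarrow> 'v \<Rightarrow> 'e set \<Rightarrow> bool" where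
  "edge_cut E tail head A u xi \<longleftrightarrow> A \<subseteq> E \<and>
     (\<forall>p. is_path E tail head p \<and> hd p \<in> xi \<and> head (last p) = u \<longrightarrow> set p \<inter> A \<noteq> {})"

definition mincut :: "'e set \<Rightarrow> ('e \<Rightarrow> 'v) \<Rightarrow> ('e \<Rightarrow> 'v) \<Rightarrow> 'e set \<Rightarrow> 'v \<Rightarrow> nat" where
  "mincut E tail head xi u = Min {card A | A. edge_cut E tail head A u xi}"

definition is_min_cut :: "'e set \<Rightarrow> ('e \<Rightarrow> 'v) \<Rightarrow> ('e \<Rightarrow> 'v) \<Rightarrow> 'e set \<Rightarrow> 'v \<Rightarrow> 'e set \<Rightarrow> bool" where
  "is_min_cut E tail head A u xi \<longleftrightarrow>
     edge_cut E tail head A u xi \<and> card A = mincut E tail head xi u"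

definition primary_min_cut :: "'e set \<Rightarrow> ('e \<Rightarrow> 'v) \<Rightarrow> ('e \<Rightarrow> 'v) \<Rightarrow> 'e set \<Rightarrow> 'v \<Rightarrow> 'e set \<Rightarrow> bool" where
  "primary_min_cut E tail head A u xi \<longleftrightarrow>
     is_min_cut E tail head A u xi \<and>
     (\<forall>B. is_min_cut E tail head B u xi \<longrightarrow> edge_cut E tail head A u B)"

definition primary_for :: "'e set \<Rightarrow> ('e \<Rightarrow> 'v) \<Rightarrow> ('e \<Rightarrow> 'v) \<Rightarrow> 'e set \<Rightarrow> 'v \<Rightarrow> bool" where
  "primary_for E tail head xi u \<longleftrightarrow> primary_min_cut E tail head xi u xi"

definition Ecal :: "'e set \<Rightarrow> ('e \<Rightarrow> 'v) \<Rightarrow> ('e \<Rightarrow> 'v) \<Rightarrow> 'v \<Rightarrow> nat \<Rightarrow> 'e set set" where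
  "Ecal E tail head t r = {xi. xi \<subseteq> E \<and> mincut E tail head xi t \<le> r}"

definition Acal :: "'e set \<Rightarrow> ('e \<Rightarrow> 'v) \<Rightarrow> ('e \<Rightarrow> 'v) \<Rightarrow> 'v \<Rightarrow> nat \<Rightarrow> 'e set set" where
  "Acal E tail head t r = {xi. xi \<subseteq> E \<and> card xi = r \<and> primary_for E tail head xi t}"

text \<open>Coordinates of extended global encoding kernels are indexed by
the type nat + e: Inl i stands for the imaginary source edge d_(i+1)' (i < omega),
Inr e for the imaginary error edge e'. The same type indexes the input edges of a
node: In(s) = imaginary source edges, In(v) = real incoming edges otherwise.\<close>

definition unitv :: "'i \<Rightarrow> 'i \<Rightarrow> 'a::field" where
  "unitv j = (\<lambda>i. if i = j then 1 else 0)"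

definition In_ext :: "nat \<Rightarrow> 'e set \<Rightarrow> ('e \<Rightarrow> 'v) \<Rightarrow> 'v \<Rightarrow> 'v \<Rightarrow> (nat + 'e) set" where
  "In_ext \<omega> E head s v =
     (if v = s then Inl ` {..<\<omega>} else Inr ` {d \<in> E. head d = v})"

definition fext :: "('e \<Rightarrow> (nat + 'e) \<Rightarrow> 'a::field) \<Rightarrow> nat + 'e \<Rightarrow> (nat + 'e) \<Rightarrow> 'a" where
  "fext F d = (case d of Inl i \<Rightarrow> unitv (Inl i) | Inr e \<Rightarrow> F e)"

text \<open>F are the extended global encoding kernels of the code with local coefficients k
(on a DAG these are uniquely determined by the recursion).\<close>
definition is_ext_kernels ::
  "nat \<Rightarrow> 'e set \<Rightarrow> ('e \<Rightarrow> 'v) \<Rightarrow> ('e \<Rightarrow> 'v) \<Rightarrow> 'v \<Rightarrow> ((nat + 'e) \<Rightarrow> 'e \<Rightarrow> 'a::field)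
   \<Rightarrow> ('e \<Rightarrow> (nat + 'e) \<Rightarrow> 'a) \<Rightarrow> bool" where
  "is_ext_kernels \<omega> E tail head s k F \<longleftrightarrow>
     (\<forall>e\<in>E. F e = (\<lambda>j. (\<Sum>d\<in>In_ext \<omega> E head s (tail e). k d e * fext F d j) + unitv (Inr e) j))"

text \<open>row_t(d_i'), as a vector indexed by In(t) (zero outside In(t)).\<close>
definition row :: "'e set \<Rightarrow> ('e \<Rightarrow> 'v) \<Rightarrow> ('e \<Rightarrow> (nat + 'e) \<Rightarrow> 'a::field) \<Rightarrow> 'v \<Rightarrow> nat \<Rightarrow> 'e \<Rightarrow> 'a" where
  "row E head F t i = (\<lambda>e. if e \<in> E \<and> head e = t then F e (Inl i) else 0)"

definition fscale :: "'a::field \<Rightarrow> ('e \<Rightarrow> 'a) \<Rightarrow> ('e \<Rightarrow> 'a)" where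
  "fscale c v = (\<lambda>x. c * v x)"

definition Phi :: "nat \<Rightarrow> 'e set \<Rightarrow> ('e \<Rightarrow> 'v) \<Rightarrow> ('e \<Rightarrow> (nat + 'e) \<Rightarrow> 'a::field) \<Rightarrow> 'v \<Rightarrow> ('e \<Rightarrow> 'a) set" where
  "Phi \<omega> E head F t = module.span fscale {row E head F t i | i. i < \<omega>}"

definition dimPhi :: "nat \<Rightarrow> 'e set \<Rightarrow> ('e \<Rightarrow> 'v) \<Rightarrow> ('e \<Rightarrow> (nat + 'e) \<Rightarrow> 'a::field) \<Rightarrow> 'v \<Rightarrow> nat" where
  "dimPhi \<omega> E head F t = vector_space.dim fscale (Phi \<omega> E head F t)"

text \<open>Received vector at t: (x z) . F_t, indexed by In(t) (zero outside In(t)).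
Messages x are vectors in F^omega, represented by functions vanishing at i >= omega;
error vectors z are indexed by E.\<close>
definition received :: "nat \<Rightarrow> 'e set \<Rightarrow> ('e \<Rightarrow> 'v) \<Rightarrow> ('e \<Rightarrow> (nat + 'e) \<Rightarrow> 'a::field) \<Rightarrow> 'v
    \<Rightarrow> (nat \<Rightarrow> 'a) \<Rightarrow> ('e \<Rightarrow> 'a) \<Rightarrow> 'e \<Rightarrow> 'a" where
  "received \<omega> E head F t x z = (\<lambda>ee. if ee \<in> E \<and> head ee = t then
       (\<Sum>i<\<omega>. x i * F ee (Inl i)) + (\<Sum>e\<in>E. z e * F ee (Inr e)) else 0)"

definition matches :: "('e \<Rightarrow> 'a::zero) \<Rightarrow> 'e set \<Rightarrow> bool" where
  "matches z xi \<longleftrightarrow> (\<forall>e. e \<notin> xi \<longrightarrow> z e = 0)"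

definition Zcal :: "'e set set \<Rightarrow> ('e \<Rightarrow> 'a::zero) set" where
  "Zcal C = {z. \<exists>xi\<in>C. matches z xi}"

definition corrects :: "nat \<Rightarrow> 'e set \<Rightarrow> ('e \<Rightarrow> 'v) \<Rightarrow> ('e \<Rightarrow> (nat + 'e) \<Rightarrow> 'a::field) \<Rightarrow> 'v
    \<Rightarrow> ('e \<Rightarrow> 'a) set \<Rightarrow> bool" where
  "corrects \<omega> E head F t Z \<longleftrightarrow>
     (\<forall>x x' z z'. (\<forall>i\<ge>\<omega>. x i = 0) \<and> (\<forall>i\<ge>\<omega>. x' i = 0) \<and> z \<in> Z \<and> z' \<in> Z \<and>
        received \<omega> E head F t x z = received \<omega> E head F t x' z' \<longrightarrow> x = x')"

end

theory Submission
  imports Defs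
begin

locale net =
  fixes V :: "'v set" and E :: "'e set" and tail head :: "'e \<Rightarrow> 'v" and s :: 'v and T :: "'v set"
  assumes nw: "network V E tail head s T"
begin

abbreviation "pth \<equiv> is_path E tail head"

lemma finE: "finite E" using nw by (simp add: network_def)
lemma head_ne_s: "e \<in> E \<Longrightarrow> head e \<noteq> s" using nw by (simp add: network_def)
lemma acyc: "pth p \<Longrightarrow> head (last p) \<noteq> tail (hd p)" using nw by (simp add: network_def)

lemma pth_single[simp]: "pth [e] \<longleftrightarrow> e \<in> E"
  by (simp add: is_path_def)

lemma pth_cons2[simp]: "pth (e # f # p) \<longleftrightarrow> e \<in> E \<and> tail f = head e \<and> pth (f # p)"
proof
  assume a: "pth (e # f # p)"
  have "tail f = head e" using a unfolding is_path_def by (metis Suc_less_eq length_Cons nth_Cons_0 nth_Cons_Suc zero_less_Suc)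
  moreover have "pth (f # p)" using a unfolding is_path_def
    by (metis (no_types, lifting) Suc_less_eq insert_subset length_Cons list.discI list.simps(15) nth_Cons_Suc)
  ultimately show "e \<in> E \<and> tail f = head e \<and> pth (f # p)" using a by (simp add: is_path_def)
next
  assume a: "e \<in> E \<and> tail f = head e \<and> pth (f # p)"
  show "pth (e # f # p)" unfolding is_path_def
  proof (intro conjI allI impI)
    show "set (e # f # p) \<subseteq> E" using a by (simp add: is_path_def)
    fix i assume "Suc i < length (e # f # p)"
    then show "tail ((e # f # p) ! Suc i) = head ((e # f # p) ! i)"
      using a unfolding is_path_def by (cases i) auto
  qed simp
qed

lemma pth_append: "p \<noteq> [] \<Longrightarrow> q \<noteq> [] \<Longrightarrow> pth (p @ q) \<longleftrightarrow> pth p \<and> pth q \<and> tail (hd q) = head (last p)"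
proof (induction p)
  case Nil then show ?case by simp
next
  case (Cons a p)
  show ?case
  proof (cases p)
    case Nil
    then show ?thesis using Cons.prems by (cases q) auto
  next
    case (Cons b p')
    then show ?thesis using Cons.IH Cons.prems by auto
  qed
qed

lemma pth_nonempty: "pth p \<Longrightarrow> p \<noteq> []" by (simp add: is_path_def)
lemma pth_sub: "pth p \<Longrightarrow> set p \<subseteq> E" by (simp add: is_path_def)

lemma pth_suffix: "pth (p @ q) \<Longrightarrow> q \<noteq> [] \<Longrightarrow> pth q"
  by (cases "p = []") (auto simp: pth_append)
lemma pth_prefix: "pth (p @ q) \<Longrightarrow> p \<noteq> [] \<Longrightarrow> pth p"
  by (cases "q = []") (auto simp: pth_append)

definition Rset :: "'e set \<Rightarrow> 'v \<Rightarrow> 'e set" where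
  "Rset A u = {e. \<exists>p. pth p \<and> hd p = e \<and> head (last p) = u \<and> set p \<inter> A = {}}"

lemma Rset_sub: "Rset A u \<subseteq> E"
  unfolding Rset_def using pth_sub pth_nonempty by fastforce

lemma cut_E: "edge_cut E tail head E u X"
  unfolding edge_cut_def
proof (intro conjI allI impI)
  fix p assume "pth p \<and> hd p \<in> X \<and> head (last p) = u"
  then have "hd p \<in> set p \<inter> E" using pth_sub pth_nonempty hd_in_set by blast
  then show "set p \<inter> E \<noteq> {}" by blast
qed simp

lemma fin_cards: "finite {card A |A. edge_cut E tail head A u X}"
proof -
  have "{card A |A. edge_cut E tail head A u X} \<subseteq> card ` Pow E"
    unfolding edge_cut_def by auto
  then show ?thesis using finE finite_subset by blast
qed

lemma mincut_le: "edge_cut E tail head A u X \<Longrightarrow> mincut E tail head X u \<le> card A"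
  unfolding mincut_def using fin_cards by (intro Min_le) auto

lemma mincut_ex: "\<exists>A. edge_cut E tail head A u X \<and> card A = mincut E tail head X u"
proof -
  have "mincut E tail head X u \<in> {card A |A. edge_cut E tail head A u X}"
    unfolding mincut_def
  proof (rule Min_in)
    show "finite {card A |A. edge_cut E tail head A u X}" by (rule fin_cards)
    show "{card A |A. edge_cut E tail head A u X} \<noteq> {}" using cut_E[of u X] by blast
  qed
  then show ?thesis by auto
qed

lemma cut_mono: "X \<subseteq> X2 \<Longrightarrow> edge_cut E tail head A u X2 \<Longrightarrow> edge_cut E tail head A u X"
  unfolding edge_cut_def by blast

lemma mincut_mono: "X \<subseteq> X2 \<Longrightarrow> mincut E tail head X u \<le> mincut E tail head X2 u"
  using mincut_ex[of u X2] mincut_le cut_mono by metis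

lemma mincut_insert: "e \<in> E \<Longrightarrow> mincut E tail head (insert e X) u \<le> Suc (mincut E tail head X u)"
proof -
  assume e: "e \<in> E"
  obtain A where A: "edge_cut E tail head A u X" "card A = mincut E tail head X u"
    using mincut_ex by blast
  have "edge_cut E tail head (insert e A) u (insert e X)"
    using A(1) e unfolding edge_cut_def by (auto simp: hd_in_set pth_nonempty)
  then have "mincut E tail head (insert e X) u \<le> card (insert e A)" by (rule mincut_le)
  also have "\<dots> \<le> Suc (card A)" using A(1) finE unfolding edge_cut_def
    by (metis card_insert_if finite_subset le_SucI order_refl)
  finally show ?thesis using A by simp
qed

lemma mincut_E_ge: "maxflow E tail head s u \<le> mincut E tail head E u"
proof -
  obtain A where A: "edge_cut E tail head A u E" "card A = mincut E tail head E u"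
    using mincut_ex by blast
  have nc: "node_cut E tail head A u s"
    using A(1) unfolding edge_cut_def node_cut_def
    by (metis hd_in_set pth_nonempty pth_sub subsetD)
  have fin: "finite {card A |A. node_cut E tail head A u s}"
  proof -
    have "{card A |A. node_cut E tail head A u s} \<subseteq> card ` Pow E"
      unfolding node_cut_def by auto
    then show ?thesis using finE finite_subset by blast
  qed
  show ?thesis unfolding maxflow_def using nc fin A(2) by (metis (mono_tags, lifting) Min_le mem_Collect_eq)
qed

lemma ivt: "finite S \<Longrightarrow> S \<subseteq> E \<Longrightarrow> mincut E tail head X u \<le> r \<Longrightarrow> r \<le> mincut E tail head (X \<union> S) u
   \<Longrightarrow> \<exists>X'. X \<subseteq> X' \<and> X' \<subseteq> X \<union> S \<and> mincut E tail head X' u = r"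
proof (induction S rule: finite_induct)
  case empty then show ?case by auto
next
  case (insert a S)
  show ?case
  proof (cases "r \<le> mincut E tail head (X \<union> S) u")
    case True
    then show ?thesis using insert by blast
  next
    case False
    have "mincut E tail head (X \<union> insert a S) u \<le> Suc (mincut E tail head (X \<union> S) u)"
      using mincut_insert[of a "X \<union> S" u] insert.prems by simp
    then have "mincut E tail head (X \<union> insert a S) u = r" using False insert.prems by linarith
    then show ?thesis by blast
  qed
qed

lemma cut_trans: "edge_cut E tail head Y u X \<Longrightarrow> edge_cut E tail head C u Y \<Longrightarrow> edge_cut E tail head C u X"
proof -
  assume Y: "edge_cut E tail head Y u X" and C: "edge_cut E tail head C u Y"
  show ?thesis unfolding edge_cut_def
  proof (intro conjI allI impI)
    show "C \<subseteq> E" using C unfolding edge_cut_def by (rule conjunct1)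
    fix p assume p: "pth p \<and> hd p \<in> X \<and> head (last p) = u"
    then have "set p \<inter> Y \<noteq> {}" using Y unfolding edge_cut_def by blast
    then have "\<exists>y\<in>set p. y \<in> Y" by blast
    then obtain y where y: "y \<in> set p" "y \<in> Y" by blast
    obtain p1 p2 where sp0: "p = p1 @ y # p2" using split_list[OF y(1)] by blast
    have sp: "p = p1 @ y # p2" "y \<in> Y" using sp0 y by auto
    have "pth (y # p2)" using p sp0 pth_suffix[of p1 "y # p2"] by simp
    moreover have "head (last (y # p2)) = u" using p sp by simp
    moreover have "hd (y # p2) \<in> Y" using sp by simp
    ultimately have "set (y # p2) \<inter> C \<noteq> {}" using C unfolding edge_cut_def by blast
    then show "set p \<inter> C \<noteq> {}" using sp by auto
  qed
qed


lemma cutD: "edge_cut E tail head A u X \<Longrightarrow> pth p \<Longrightarrow> hd p \<in> X \<Longrightarrow> head (last p) = u \<Longrightarrow> set p \<inter> A \<noteq> {}"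
  unfolding edge_cut_def by blast
lemma cut_subE: "edge_cut E tail head A u X \<Longrightarrow> A \<subseteq> E"
  unfolding edge_cut_def by blast
lemma cutI: "A \<subseteq> E \<Longrightarrow> (\<And>p. pth p \<Longrightarrow> hd p \<in> X \<Longrightarrow> head (last p) = u \<Longrightarrow> set p \<inter> A \<noteq> {}) \<Longrightarrow> edge_cut E tail head A u X"
  unfolding edge_cut_def by blast

lemma last_hit:
  assumes "pth p" "set p \<inter> S \<noteq> {}"
  obtains p1 a p2 where "p = p1 @ a # p2" "a \<in> S" "set p2 \<inter> S = {}" "pth (a # p2)"
proof -
  have "\<exists>x\<in>set p. x \<in> S" using assms(2) by blast
  then obtain p1 a p2 where sp: "p = p1 @ a # p2" "a \<in> S" "\<forall>z\<in>set p2. z \<notin> S"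
    using split_list_last_prop[of p "\<lambda>x. x \<in> S"] by blast
  have "pth (a # p2)" using assms(1) sp(1) pth_suffix[of p1 "a # p2"] by simp
  moreover have "set p2 \<inter> S = {}" using sp(3) by blast
  ultimately show ?thesis using that sp by blast
qed

lemma first_hit:
  assumes "pth p" "set p \<inter> S \<noteq> {}"
  obtains p1 a p2 where "p = p1 @ a # p2" "a \<in> S" "set p1 \<inter> S = {}" "pth (p1 @ [a])"
proof -
  have "\<exists>x\<in>set p. x \<in> S" using assms(2) by blast
  then obtain p1 a p2 where sp: "p = p1 @ a # p2" "a \<in> S" "\<forall>z\<in>set p1. z \<notin> S"
    using split_list_first_prop[of p "\<lambda>x. x \<in> S"] by blast
  have "pth (p1 @ [a])"
  proof (cases "p2 = []")
    case True then show ?thesis using assms(1) sp(1) by simp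
  next
    case False then show ?thesis using assms(1) sp(1) pth_prefix[of "p1 @ [a]" p2] by simp
  qed
  moreover have "set p1 \<inter> S = {}" using sp(3) by blast
  ultimately show ?thesis using that sp by blast
qed

lemma primary_ex: "\<exists>Y. primary_min_cut E tail head Y u X"
proof -
  define m where "m = mincut E tail head X u"
  define M where "M = {A. edge_cut E tail head A u X \<and> card A = m}"
  obtain A0 where "A0 \<in> M" using mincut_ex[of u X] unfolding M_def m_def by blast
  then obtain Y where Y: "Y \<in> M" and Ymin: "\<And>A. A \<in> M \<Longrightarrow> card (Rset Y u) \<le> card (Rset A u)"
    using ex_has_least_nat[of "\<lambda>A. A \<in> M" A0 "\<lambda>A. card (Rset A u)"] by blast
  have Ycut: "edge_cut E tail head Y u X" and Ycard: "card Y = m" using Y unfolding M_def by auto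
  have YE: "Y \<subseteq> E" using cut_subE[OF Ycut] .
  have prim: "edge_cut E tail head Y u B" if Bcut: "edge_cut E tail head B u X" and Bcard: "card B = m" for B
  proof (rule ccontr)
    assume "\<not> edge_cut E tail head Y u B"
    then have "\<exists>p. pth p \<and> hd p \<in> B \<and> head (last p) = u \<and> set p \<inter> Y = {}"
      using YE unfolding edge_cut_def by blast
    then obtain p where p: "pth p" "hd p \<in> B" "head (last p) = u" "set p \<inter> Y = {}"
      by blast
    have BE: "B \<subseteq> E" using cut_subE[OF Bcut] .
    define S where "S = Y \<union> B"
    define C where "C = {e\<in>S. \<exists>p2. pth (e # p2) \<and> head (last (e # p2)) = u \<and> set p2 \<inter> S = {}}"
    define C' where "C' = {e\<in>S. \<exists>p1. pth (p1 @ [e]) \<and> hd (p1 @ [e]) \<in> X \<and> set p1 \<inter> S = {}}"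
    have CS: "C \<subseteq> S" and C'S: "C' \<subseteq> S" unfolding C_def C'_def by auto
    have SE: "S \<subseteq> E" using YE BE unfolding S_def by blast
    have finS: "finite S" using finite_subset[OF SE finE] .
    have finY: "finite Y" using finite_subset[OF YE finE] .
    have finB: "finite B" using finite_subset[OF BE finE] .
    have Ccut: "edge_cut E tail head C u X"
    proof (rule cutI)
      show "C \<subseteq> E" using CS SE by auto
      fix q assume q: "pth q" "hd q \<in> X" "head (last q) = u"
      have "set q \<inter> Y \<noteq> {}" using cutD[OF Ycut q] .
      then have "set q \<inter> S \<noteq> {}" unfolding S_def by blast
      then obtain q1 a q2 where sp: "q = q1 @ a # q2" "a \<in> S" "set q2 \<inter> S = {}" "pth (a # q2)"
        using last_hit[OF q(1)] by blast
      have "head (last (a # q2)) = u" using q(3) sp(1) by simp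
      then have "a \<in> C" unfolding C_def using sp by blast
      then show "set q \<inter> C \<noteq> {}" using sp(1) by auto
    qed
    have C'cut: "edge_cut E tail head C' u X"
    proof (rule cutI)
      show "C' \<subseteq> E" using C'S SE by auto
      fix q assume q: "pth q" "hd q \<in> X" "head (last q) = u"
      have "set q \<inter> Y \<noteq> {}" using cutD[OF Ycut q] .
      then have "set q \<inter> S \<noteq> {}" unfolding S_def by blast
      then obtain q1 a q2 where sp: "q = q1 @ a # q2" "a \<in> S" "set q1 \<inter> S = {}" "pth (q1 @ [a])"
        using first_hit[OF q(1)] by blast
      have "hd (q1 @ [a]) \<in> X" using q(2) sp(1) by (cases q1) auto
      then have "a \<in> C'" unfolding C'_def using sp by blast
      then show "set q \<inter> C' \<noteq> {}" using sp(1) by auto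
    qed
    have joined: "a \<in> Y \<and> a \<in> B" if a: "a \<in> C" "a \<in> C'" for a
    proof -
      obtain p2 where p2: "pth (a # p2)" "head (last (a # p2)) = u" "set p2 \<inter> S = {}"
        using a(1) unfolding C_def by blast
      obtain p1 where p1: "pth (p1 @ [a])" "hd (p1 @ [a]) \<in> X" "set p1 \<inter> S = {}"
        using a(2) unfolding C'_def by blast
      have q: "pth (p1 @ a # p2)"
      proof (cases "p1 = []")
        case True then show ?thesis using p2 by simp
      next
        case False
        then have "pth p1" "tail a = head (last p1)" using p1(1) pth_append[of p1 "[a]"] by auto
        then show ?thesis using False p2(1) pth_append[of p1 "a # p2"] by simp
      qed
      have hq: "hd (p1 @ a # p2) \<in> X" using p1(2) by (cases p1) auto
      have lq: "head (last (p1 @ a # p2)) = u" using p2(2) by simp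
      have "set (p1 @ a # p2) \<inter> Y \<noteq> {}" using cutD[OF Ycut q hq lq] .
      then have "a \<in> Y" using p1(3) p2(3) unfolding S_def by auto
      moreover have "set (p1 @ a # p2) \<inter> B \<noteq> {}" using cutD[OF Bcut q hq lq] .
      then have "a \<in> B" using p1(3) p2(3) unfolding S_def by auto
      ultimately show ?thesis by blast
    qed
    have finC: "finite C" "finite C'" using CS C'S finS finite_subset by auto
    have "card C + card C' = card (C \<union> C') + card (C \<inter> C')" using card_Un_Int finC by blast
    also have "\<dots> \<le> card S + card (Y \<inter> B)"
    proof (rule add_mono)
      show "card (C \<union> C') \<le> card S" using CS C'S finS by (intro card_mono) auto
      have "Y \<inter> B \<subseteq> S" unfolding S_def by blast
      then have "finite (Y \<inter> B)" using finS finite_subset by blast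
      moreover have "C \<inter> C' \<subseteq> Y \<inter> B" using joined by blast
      ultimately show "card (C \<inter> C') \<le> card (Y \<inter> B)" by (rule card_mono)
    qed
    also have "\<dots> = card Y + card B" unfolding S_def
      using card_Un_Int[OF finY finB] by simp
    finally have le: "card C + card C' \<le> 2 * m" using Ycard Bcard by simp
    have "m \<le> card C" "m \<le> card C'" using mincut_le[OF Ccut] mincut_le[OF C'cut] m_def by auto
    then have "card C = m" using le by linarith
    then have CM: "C \<in> M" unfolding M_def using Ccut by blast
    have RC: "e \<notin> S \<and> e \<in> Rset Y u" if e: "e \<in> Rset C u" for e
    proof -
      obtain q where q: "pth q" "hd q = e" "head (last q) = u" "set q \<inter> C = {}"
        using e unfolding Rset_def by blast
      have "set q \<inter> S = {}"
      proof (rule ccontr)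
        assume "set q \<inter> S \<noteq> {}"
        then obtain q1 a q2 where sp: "q = q1 @ a # q2" "a \<in> S" "set q2 \<inter> S = {}" "pth (a # q2)"
          using last_hit[OF q(1)] by blast
        have "head (last (a # q2)) = u" using q(3) sp(1) by simp
        then have "a \<in> C" unfolding C_def using sp by blast
        then show False using sp(1) q(4) by auto
      qed
      moreover have "e \<in> set q" using q(1,2) pth_nonempty hd_in_set by blast
      ultimately have "e \<notin> S" by blast
      moreover have "set q \<inter> Y = {}" using \<open>set q \<inter> S = {}\<close> unfolding S_def by blast
      then have "e \<in> Rset Y u" unfolding Rset_def using q by blast
      ultimately show ?thesis by blast
    qed
    have "hd p \<in> Rset Y u" unfolding Rset_def using p by blast
    moreover have "hd p \<notin> Rset C u" using RC p(2) unfolding S_def by blast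
    moreover have "Rset C u \<subseteq> Rset Y u" using RC by blast
    ultimately have "Rset C u \<subset> Rset Y u" by blast
    then have "card (Rset C u) < card (Rset Y u)"
      using psubset_card_mono[OF finite_subset[OF Rset_sub finE]] by blast
    then show False using Ymin[OF CM] by linarith
  qed
  have "primary_min_cut E tail head Y u X" unfolding primary_min_cut_def is_min_cut_def
  proof (intro conjI allI impI)
    show "edge_cut E tail head Y u X" by (rule Ycut)
    show "card Y = mincut E tail head X u" using Ycard m_def by simp
    fix B assume "edge_cut E tail head B u X \<and> card B = mincut E tail head X u"
    then show "edge_cut E tail head Y u B" using prim m_def by simp
  qed
  then show ?thesis by blast
qed

lemma primary_self:
  assumes "primary_min_cut E tail head Y u X"
  shows "primary_for E tail head Y u" "card Y = mincut E tail head X u"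
    "edge_cut E tail head Y u X" "Y \<subseteq> E"
proof -
  have Ycut: "edge_cut E tail head Y u X" and Yc: "card Y = mincut E tail head X u"
    and pr: "\<And>B. is_min_cut E tail head B u X \<Longrightarrow> edge_cut E tail head Y u B"
    using assms unfolding primary_min_cut_def is_min_cut_def by auto
  have YE: "Y \<subseteq> E" using cut_subE[OF Ycut] .
  have selfcut: "edge_cut E tail head Y u Y"
    by (rule cutI[OF YE]) (use pth_nonempty hd_in_set in blast)
  have "mincut E tail head X u \<le> mincut E tail head Y u"
  proof -
    obtain A where A: "edge_cut E tail head A u Y" "card A = mincut E tail head Y u"
      using mincut_ex by blast
    have "edge_cut E tail head A u X" using cut_trans[OF Ycut A(1)] .
    then show ?thesis using mincut_le A(2) by metis
  qed
  moreover have "mincut E tail head Y u \<le> card Y" using mincut_le[OF selfcut] .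
  ultimately have eq: "mincut E tail head Y u = card Y" using Yc by linarith
  have "primary_min_cut E tail head Y u Y"
    unfolding primary_min_cut_def is_min_cut_def
  proof (intro conjI allI impI)
    show "edge_cut E tail head Y u Y" by (rule selfcut)
    show "card Y = mincut E tail head Y u" using eq by simp
    fix B assume B: "edge_cut E tail head B u Y \<and> card B = mincut E tail head Y u"
    have "is_min_cut E tail head B u X" unfolding is_min_cut_def
      using cut_trans[OF Ycut] B eq Yc by auto
    then show "edge_cut E tail head Y u B" by (rule pr)
  qed
  then show "primary_for E tail head Y u" unfolding primary_for_def .
  show "card Y = mincut E tail head X u" "edge_cut E tail head Y u X" "Y \<subseteq> E" using Yc Ycut YE by auto
qed


lemma reduce:
  assumes "xi \<subseteq> E" "mincut E tail head xi u \<le> r" "r \<le> maxflow E tail head s u"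
  shows "\<exists>Y\<in>Acal E tail head u r. edge_cut E tail head Y u xi"
proof -
  have un: "xi \<union> (E - xi) = E" using assms(1) by blast
  have "r \<le> mincut E tail head (xi \<union> (E - xi)) u" using assms(3) mincut_E_ge[of u] un by simp
  then obtain X' where X': "xi \<subseteq> X'" "X' \<subseteq> xi \<union> (E - xi)" "mincut E tail head X' u = r"
    using ivt[of "E - xi" xi u r] finE assms(2) by blast
  obtain Y where Y: "primary_min_cut E tail head Y u X'" using primary_ex by blast
  note P = primary_self[OF Y]
  have "Y \<in> Acal E tail head u r" unfolding Acal_def using P X'(3) by simp
  moreover have "edge_cut E tail head Y u xi" using cut_mono[OF X'(1) P(3)] .
  ultimately show ?thesis by blast
qed

end

locale lnec = net V E tail head s T
  for V :: "'v set" and E :: "'e set" and tail head :: "'e \<Rightarrow> 'v" and s :: 'v and T :: "'v set" +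
  fixes \<omega> :: nat and k :: "(nat + 'e) \<Rightarrow> 'e \<Rightarrow> 'a::field" and F :: "'e \<Rightarrow> (nat + 'e) \<Rightarrow> 'a"
  assumes K: "is_ext_kernels \<omega> E tail head s k F"
begin

definition rel :: "('e \<times> 'e) set" where
  "rel = {(d, e). d \<in> E \<and> e \<in> E \<and> head d = tail e}"

lemma trancl_path: "(d, e) \<in> rel\<^sup>+ \<Longrightarrow> \<exists>p. pth (d # p) \<and> head (last (d # p)) = tail e"
proof (induction rule: trancl_induct)
  case (base e)
  then show ?case unfolding rel_def by (intro exI[of _ "[]"]) auto
next
  case (step e f)
  then obtain p where p: "pth (d # p)" "head (last (d # p)) = tail e" by blast
  have eE: "e \<in> E" and ef: "head e = tail f" using step(2) unfolding rel_def by auto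
  have "pth ((d # p) @ [e])" using pth_append[of "d # p" "[e]"] p eE by simp
  then show ?case using ef by (intro exI[of _ "p @ [e]"]) simp
qed

lemma rel_acyclic: "acyclic rel"
  unfolding acyclic_def
proof
  fix d show "(d, d) \<notin> rel\<^sup>+"
  proof
    assume "(d, d) \<in> rel\<^sup>+"
    then obtain p where "pth (d # p)" "head (last (d # p)) = tail d" using trancl_path by blast
    then show False using acyc[of "d # p"] by simp
  qed
qed

lemma rel_fin: "finite rel"
proof -
  have "rel \<subseteq> E \<times> E" unfolding rel_def by auto
  then show ?thesis using finE finite_subset by blast
qed

lemma wf_rel: "wf rel" using finite_acyclic_wf[OF rel_fin rel_acyclic] .
lemma wf_rel_conv: "wf (rel\<inverse>)" using finite_acyclic_wf_converse[OF rel_fin rel_acyclic] .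

lemma no_loop: "(d, d) \<notin> rel\<^sup>+" using rel_acyclic unfolding acyclic_def by blast

lemma F0: "e \<in> E \<Longrightarrow> F e (Inr b) = (\<Sum>d\<in>{d\<in>E. head d = tail e}. k (Inr d) e * F d (Inr b)) + (if b = e then 1 else 0)"
proof -
  assume eE: "e \<in> E"
  have Fe: "F e (Inr b) = (\<Sum>d\<in>In_ext \<omega> E head s (tail e). k d e * fext F d (Inr b)) + unitv (Inr e :: nat + 'e) (Inr b)"
    using K eE unfolding is_ext_kernels_def by simp
  have u: "unitv (Inr e :: nat + 'e) (Inr b) = (if b = e then 1 else (0::'a))" unfolding unitv_def by simp
  show ?thesis
  proof (cases "tail e = s")
    case True
    have emp: "{d\<in>E. head d = tail e} = {}" using True head_ne_s by auto
    have z: "(\<Sum>d\<in>In_ext \<omega> E head s (tail e). k d e * fext F d (Inr b)) = 0"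
      unfolding In_ext_def using True by (simp add: sum.reindex fext_def unitv_def)
    show ?thesis unfolding emp using Fe u z by simp
  next
    case False
    have "(\<Sum>d\<in>In_ext \<omega> E head s (tail e). k d e * fext F d (Inr b))
        = (\<Sum>d\<in>Inr ` {d\<in>E. head d = tail e}. k d e * fext F d (Inr b))"
      unfolding In_ext_def using False by simp
    also have "\<dots> = (\<Sum>d\<in>{d\<in>E. head d = tail e}. k (Inr d) e * F d (Inr b))"
      by (subst sum.reindex) (auto simp: fext_def)
    finally show ?thesis using Fe u by simp
  qed
qed

lemma supp: "d \<in> E \<Longrightarrow> F d (Inr b) \<noteq> 0 \<Longrightarrow> d = b \<or> (b, d) \<in> rel\<^sup>+"
proof (induction d rule: wf_induct_rule[OF wf_rel])
  case (1 d)
  show ?case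
  proof (rule ccontr)
    assume nd: "\<not> (d = b \<or> (b, d) \<in> rel\<^sup>+)"
    then have "(\<Sum>d'\<in>{d'\<in>E. head d' = tail d}. k (Inr d') d * F d' (Inr b)) \<noteq> 0"
      using F0[OF "1.prems"(1), of b] "1.prems"(2) by auto
    then obtain d' where d': "d' \<in> E" "head d' = tail d" "k (Inr d') d * F d' (Inr b) \<noteq> 0"
      using sum.not_neutral_contains_not_neutral by blast
    have r: "(d', d) \<in> rel" unfolding rel_def using d' "1.prems"(1) by simp
    have "F d' (Inr b) \<noteq> 0" using d'(3) by auto
    then have "d' = b \<or> (b, d') \<in> rel\<^sup>+" using "1.IH"[OF r d'(1)] by blast
    then have "(b, d) \<in> rel\<^sup>+" using r by auto
    then show False using nd by blast
  qed
qed

lemma F_self: "e \<in> E \<Longrightarrow> F e (Inr e) = 1"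
proof -
  assume eE: "e \<in> E"
  have "\<forall>d\<in>{d\<in>E. head d = tail e}. k (Inr d) e * F d (Inr e) = 0"
  proof
    fix d assume d: "d \<in> {d\<in>E. head d = tail e}"
    then have r: "(d, e) \<in> rel" unfolding rel_def using eE by simp
    have "F d (Inr e) = 0"
    proof (rule ccontr)
      assume "F d (Inr e) \<noteq> 0"
      then have "d = e \<or> (e, d) \<in> rel\<^sup>+" using supp d by blast
      then have "(e, e) \<in> rel\<^sup>+" using r by auto
      then show False using no_loop by blast
    qed
    then show "k (Inr d) e * F d (Inr e) = 0" by simp
  qed
  then have "(\<Sum>d\<in>{d\<in>E. head d = tail e}. k (Inr d) e * F d (Inr e)) = 0" by (rule sum.neutral)
  then show ?thesis using F0[OF eE, of e] by simp
qed

lemma F_out: "e \<in> E \<Longrightarrow> f \<in> E \<Longrightarrow> tail f = head e \<Longrightarrow> F e (Inr f) = 0"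
proof (rule ccontr)
  assume a: "e \<in> E" "f \<in> E" "tail f = head e" "F e (Inr f) \<noteq> 0"
  have r: "(e, f) \<in> rel" unfolding rel_def using a by simp
  have "e = f \<or> (f, e) \<in> rel\<^sup>+" using supp a by blast
  then have "(f, f) \<in> rel\<^sup>+ \<or> (e, e) \<in> rel\<^sup>+" using r by auto
  then show False using no_loop by blast
qed

end


context lnec begin

lemma Bk: "ee \<in> E \<Longrightarrow> e \<in> E \<Longrightarrow> ee \<noteq> e \<Longrightarrow>
   F ee (Inr e) = (\<Sum>f\<in>{f\<in>E. tail f = head e}. k (Inr e) f * F ee (Inr f))"
proof (induction ee rule: wf_induct_rule[OF wf_rel])
  case (1 ee)
  define D where "D = {d\<in>E. head d = tail ee}"
  define Ou where "Ou = {f\<in>E. tail f = head e}"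
  have finD: "finite D" unfolding D_def using finE by simp
  have finO: "finite Ou" unfolding Ou_def using finE by simp
  have fact1: "F d (Inr e) = (\<Sum>f\<in>Ou. k (Inr e) f * F d (Inr f)) + (if d = e then 1 else 0)"
    if d: "d \<in> D" for d
  proof (cases "d = e")
    case True
    have "\<forall>f\<in>Ou. k (Inr e) f * F d (Inr f) = 0" unfolding Ou_def using F_out "1.prems"(2) True by simp
    then have "(\<Sum>f\<in>Ou. k (Inr e) f * F d (Inr f)) = 0" by (rule sum.neutral)
    then show ?thesis using F_self "1.prems"(2) True by simp
  next
    case False
    have r: "(d, ee) \<in> rel" using d "1.prems"(1) unfolding D_def rel_def by simp
    have "d \<in> E" using d unfolding D_def by simp
    then show ?thesis using "1.IH"[OF r _ "1.prems"(2) False] False unfolding Ou_def by simp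
  qed
  have "F ee (Inr e) = (\<Sum>d\<in>D. k (Inr d) ee * F d (Inr e))"
    using F0[OF "1.prems"(1), of e] "1.prems"(3) unfolding D_def by simp
  also have "\<dots> = (\<Sum>d\<in>D. k (Inr d) ee * ((\<Sum>f\<in>Ou. k (Inr e) f * F d (Inr f)) + (if d = e then 1 else 0)))"
    using fact1 by (intro sum.cong) auto
  also have "\<dots> = (\<Sum>d\<in>D. \<Sum>f\<in>Ou. k (Inr e) f * (k (Inr d) ee * F d (Inr f))) + (\<Sum>d\<in>D. k (Inr d) ee * (if d = e then 1 else 0))"
    by (simp add: distrib_left sum.distrib sum_distrib_left mult.left_commute)
  also have "(\<Sum>d\<in>D. k (Inr d) ee * (if d = e then 1 else 0)) = (if e \<in> D then k (Inr e) ee else 0)"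
    using finD by (simp add: if_distrib sum.delta' cong: if_cong)
  also have "(\<Sum>d\<in>D. \<Sum>f\<in>Ou. k (Inr e) f * (k (Inr d) ee * F d (Inr f))) = (\<Sum>f\<in>Ou. \<Sum>d\<in>D. k (Inr e) f * (k (Inr d) ee * F d (Inr f)))"
    by (rule sum.swap)
  finally have L: "F ee (Inr e) = (\<Sum>f\<in>Ou. \<Sum>d\<in>D. k (Inr e) f * (k (Inr d) ee * F d (Inr f))) + (if e \<in> D then k (Inr e) ee else 0)" .
  have "(\<Sum>f\<in>Ou. k (Inr e) f * F ee (Inr f)) = (\<Sum>f\<in>Ou. k (Inr e) f * ((\<Sum>d\<in>D. k (Inr d) ee * F d (Inr f)) + (if f = ee then 1 else 0)))"
    using F0[OF "1.prems"(1)] unfolding D_def by (intro sum.cong) auto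
  also have "\<dots> = (\<Sum>f\<in>Ou. \<Sum>d\<in>D. k (Inr e) f * (k (Inr d) ee * F d (Inr f))) + (\<Sum>f\<in>Ou. k (Inr e) f * (if f = ee then 1 else 0))"
    by (simp add: distrib_left sum.distrib sum_distrib_left)
  also have "(\<Sum>f\<in>Ou. k (Inr e) f * (if f = ee then 1 else 0)) = (if ee \<in> Ou then k (Inr e) ee else 0)"
    using finO by (simp add: if_distrib sum.delta cong: if_cong)
  finally have R: "(\<Sum>f\<in>Ou. k (Inr e) f * F ee (Inr f)) = (\<Sum>f\<in>Ou. \<Sum>d\<in>D. k (Inr e) f * (k (Inr d) ee * F d (Inr f))) + (if ee \<in> Ou then k (Inr e) ee else 0)" .
  have "e \<in> D \<longleftrightarrow> ee \<in> Ou" unfolding D_def Ou_def using "1.prems" by auto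
  then show ?case using L R unfolding Ou_def by simp
qed

lemma push_one:
  assumes YE: "Y \<subseteq> E"
  shows "e \<in> E \<Longrightarrow> e \<notin> Rset Y u \<Longrightarrow>
    \<exists>w. matches w Y \<and> (\<forall>ee\<in>E. head ee = u \<longrightarrow> F ee (Inr e) = (\<Sum>b\<in>E. w b * F ee (Inr b)))"
proof (induction e rule: wf_induct_rule[OF wf_rel_conv])
  case (1 e)
  show ?case
  proof (cases "e \<in> Y")
    case True
    define w where "w = (\<lambda>b. if b = e then 1 else (0::'a))"
    have "matches w Y" unfolding matches_def w_def using True by auto
    moreover have "F ee (Inr e) = (\<Sum>b\<in>E. w b * F ee (Inr b))" for ee
    proof -
      have "(\<Sum>b\<in>E. w b * F ee (Inr b)) = (\<Sum>b\<in>E. if b = e then F ee (Inr b) else 0)"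
        by (intro sum.cong) (auto simp: w_def)
      also have "\<dots> = F ee (Inr e)" using "1.prems"(1) finE by (simp add: sum.delta)
      finally show ?thesis by simp
    qed
    ultimately show ?thesis by blast
  next
    case False
    define Ou where "Ou = {f\<in>E. tail f = head e}"
    have finO: "finite Ou" unfolding Ou_def using finE by simp
    have "\<forall>f\<in>Ou. \<exists>w. matches w Y \<and> (\<forall>ee\<in>E. head ee = u \<longrightarrow> F ee (Inr f) = (\<Sum>b\<in>E. w b * F ee (Inr b)))"
    proof
      fix f assume f: "f \<in> Ou"
      have r: "(f, e) \<in> rel\<inverse>" using f "1.prems"(1) unfolding Ou_def rel_def by simp
      have fE: "f \<in> E" using f unfolding Ou_def by simp
      have "f \<notin> Rset Y u"
      proof
        assume "f \<in> Rset Y u"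
        then obtain q where q: "pth q" "hd q = f" "head (last q) = u" "set q \<inter> Y = {}"
          unfolding Rset_def by blast
        obtain q' where q': "q = f # q'" using q(1,2) pth_nonempty by (cases q) auto
        have "pth (e # q)" using q q' f "1.prems"(1) unfolding Ou_def by simp
        moreover have "head (last (e # q)) = u" using q(3) q' by simp
        moreover have "set (e # q) \<inter> Y = {}" using q(4) False by simp
        ultimately have "pth (e # q) \<and> hd (e # q) = e \<and> head (last (e # q)) = u \<and> set (e # q) \<inter> Y = {}" by simp
        then have "e \<in> Rset Y u" unfolding Rset_def by blast
        then show False using "1.prems"(2) by blast
      qed
      then show "\<exists>w. matches w Y \<and> (\<forall>ee\<in>E. head ee = u \<longrightarrow> F ee (Inr f) = (\<Sum>b\<in>E. w b * F ee (Inr b)))"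
        using "1.IH"[OF r fE] by blast
    qed
    from bchoice[OF this] obtain W where W0: "\<forall>f\<in>Ou. matches (W f) Y \<and> (\<forall>ee\<in>E. head ee = u \<longrightarrow> F ee (Inr f) = (\<Sum>b\<in>E. W f b * F ee (Inr b)))"
      by blast
    have W: "\<And>f. f \<in> Ou \<Longrightarrow> matches (W f) Y"
      "\<And>f ee. f \<in> Ou \<Longrightarrow> ee \<in> E \<Longrightarrow> head ee = u \<Longrightarrow> F ee (Inr f) = (\<Sum>b\<in>E. W f b * F ee (Inr b))"
      using W0 by blast+
    define w where "w = (\<lambda>b. \<Sum>f\<in>Ou. k (Inr e) f * W f b)"
    have "matches w Y" unfolding matches_def w_def
    proof (intro allI impI)
      fix b assume "b \<notin> Y"
      then have "\<forall>f\<in>Ou. k (Inr e) f * W f b = 0" using W(1) unfolding matches_def by simp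
      then show "(\<Sum>f\<in>Ou. k (Inr e) f * W f b) = 0" by (rule sum.neutral)
    qed
    moreover have "F ee (Inr e) = (\<Sum>b\<in>E. w b * F ee (Inr b))" if ee: "ee \<in> E" "head ee = u" for ee
    proof -
      have ne: "ee \<noteq> e"
      proof
        assume "ee = e"
        then have "pth [e] \<and> hd [e] = e \<and> head (last [e]) = u \<and> set [e] \<inter> Y = {}"
          using ee False by simp
        then have "e \<in> Rset Y u" unfolding Rset_def by blast
        then show False using "1.prems"(2) by blast
      qed
      have "F ee (Inr e) = (\<Sum>f\<in>Ou. k (Inr e) f * F ee (Inr f))"
        using Bk[OF ee(1) "1.prems"(1) ne] unfolding Ou_def .
      also have "\<dots> = (\<Sum>f\<in>Ou. k (Inr e) f * (\<Sum>b\<in>E. W f b * F ee (Inr b)))"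
        using W(2) ee by (intro sum.cong) auto
      also have "\<dots> = (\<Sum>f\<in>Ou. \<Sum>b\<in>E. k (Inr e) f * W f b * F ee (Inr b))"
        by (simp add: sum_distrib_left mult.assoc)
      also have "\<dots> = (\<Sum>b\<in>E. \<Sum>f\<in>Ou. k (Inr e) f * W f b * F ee (Inr b))"
        by (rule sum.swap)
      also have "\<dots> = (\<Sum>b\<in>E. w b * F ee (Inr b))"
        unfolding w_def by (simp add: sum_distrib_right)
      finally show ?thesis .
    qed
    ultimately show ?thesis by blast
  qed
qed

lemma push:
  assumes cut: "edge_cut E tail head Y u xi" and xiE: "xi \<subseteq> E" and m: "matches z xi"
  shows "\<exists>w. matches w Y \<and> (\<forall>ee\<in>E. head ee = u \<longrightarrow> (\<Sum>b\<in>E. z b * F ee (Inr b)) = (\<Sum>b\<in>E. w b * F ee (Inr b)))"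
proof -
  have YE: "Y \<subseteq> E" using cut_subE[OF cut] .
  have "\<forall>e\<in>xi. \<exists>w. matches w Y \<and> (\<forall>ee\<in>E. head ee = u \<longrightarrow> F ee (Inr e) = (\<Sum>b\<in>E. w b * F ee (Inr b)))"
  proof
    fix e assume e: "e \<in> xi"
    have "e \<notin> Rset Y u"
    proof
      assume "e \<in> Rset Y u"
      then obtain q where q: "pth q" "hd q = e" "head (last q) = u" "set q \<inter> Y = {}"
        unfolding Rset_def by blast
      have "set q \<inter> Y \<noteq> {}" using cutD[OF cut q(1) _ q(3)] q(2) e by simp
      then show False using q(4) by blast
    qed
    then show "\<exists>w. matches w Y \<and> (\<forall>ee\<in>E. head ee = u \<longrightarrow> F ee (Inr e) = (\<Sum>b\<in>E. w b * F ee (Inr b)))"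
      using push_one[OF YE] e xiE by blast
  qed
  from bchoice[OF this] obtain W where W0: "\<forall>e\<in>xi. matches (W e) Y \<and> (\<forall>ee\<in>E. head ee = u \<longrightarrow> F ee (Inr e) = (\<Sum>b\<in>E. W e b * F ee (Inr b)))"
    by blast
  have W: "\<And>e. e \<in> xi \<Longrightarrow> matches (W e) Y"
    "\<And>e ee. e \<in> xi \<Longrightarrow> ee \<in> E \<Longrightarrow> head ee = u \<Longrightarrow> F ee (Inr e) = (\<Sum>b\<in>E. W e b * F ee (Inr b))"
    using W0 by blast+
  define w where "w = (\<lambda>b. \<Sum>e\<in>xi. z e * W e b)"
  have "matches w Y" unfolding matches_def w_def
  proof (intro allI impI)
    fix b assume "b \<notin> Y"
    then have "\<forall>e\<in>xi. z e * W e b = 0" using W(1) unfolding matches_def by simp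
    then show "(\<Sum>e\<in>xi. z e * W e b) = 0" by (rule sum.neutral)
  qed
  moreover have "(\<Sum>b\<in>E. z b * F ee (Inr b)) = (\<Sum>b\<in>E. w b * F ee (Inr b))" if ee: "ee \<in> E" "head ee = u" for ee
  proof -
    have "(\<Sum>b\<in>E. z b * F ee (Inr b)) = (\<Sum>b\<in>xi. z b * F ee (Inr b))"
      using m xiE finE unfolding matches_def by (intro sum.mono_neutral_right) auto
    also have "\<dots> = (\<Sum>e\<in>xi. z e * (\<Sum>b\<in>E. W e b * F ee (Inr b)))"
      using W(2) ee by (intro sum.cong) auto
    also have "\<dots> = (\<Sum>e\<in>xi. \<Sum>b\<in>E. z e * W e b * F ee (Inr b))"
      by (simp add: sum_distrib_left mult.assoc)
    also have "\<dots> = (\<Sum>b\<in>E. \<Sum>e\<in>xi. z e * W e b * F ee (Inr b))"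
      by (rule sum.swap)
    also have "\<dots> = (\<Sum>b\<in>E. w b * F ee (Inr b))"
      unfolding w_def by (simp add: sum_distrib_right)
    finally show ?thesis .
  qed
  ultimately show ?thesis by blast
qed

end


lemma corrects_mono: "Z1 \<subseteq> Z2 \<Longrightarrow> corrects \<omega> E head F t Z2 \<Longrightarrow> corrects \<omega> E head F t Z1"
  unfolding corrects_def by blast

lemma Zcal_mono: "C1 \<subseteq> C2 \<Longrightarrow> Zcal C1 \<subseteq> Zcal C2"
  unfolding Zcal_def by blast

theorem theorem11:
  fixes V :: "'v set" and E :: "'e set" and tail head :: "'e \<Rightarrow> 'v"
    and s t :: 'v and T :: "'v set" and \<omega> r :: nat
    and k :: "(nat + 'e) \<Rightarrow> 'e \<Rightarrow> 'a::{field,finite}"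
    and F :: "'e \<Rightarrow> (nat + 'e) \<Rightarrow> 'a"
  assumes "network V E tail head s T"
    and "\<omega> \<ge> 1"
    and "is_ext_kernels \<omega> E tail head s k F"
    and "t \<in> T"
    and "dimPhi \<omega> E head F t = \<omega>"
    and "r \<le> maxflow E tail head s t"
  shows "corrects \<omega> E head F t (Zcal (Acal E tail head t r)) \<longleftrightarrow>
         corrects \<omega> E head F t (Zcal (Ecal E tail head t r))"
proof -
  interpret L: lnec V E tail head s T \<omega> k F
    unfolding lnec_def lnec_axioms_def net_def using assms(1,3) by blast
  have AE: "Acal E tail head t r \<subseteq> Ecal E tail head t r"
  proof
    fix xi assume "xi \<in> Acal E tail head t r"
    then have "xi \<subseteq> E" "card xi = r" "primary_for E tail head xi t" unfolding Acal_def by auto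
    then show "xi \<in> Ecal E tail head t r"
      unfolding Ecal_def primary_for_def primary_min_cut_def is_min_cut_def by auto
  qed
  have red: "\<exists>w\<in>Zcal (Acal E tail head t r). \<forall>x. received \<omega> E head F t x z = received \<omega> E head F t x w"
    if z: "z \<in> Zcal (Ecal E tail head t r)" for z
  proof -
    obtain xi where xi: "xi \<in> Ecal E tail head t r" "matches z xi" using z unfolding Zcal_def by blast
    have xiE: "xi \<subseteq> E" and mc: "mincut E tail head xi t \<le> r" using xi(1) unfolding Ecal_def by auto
    obtain Y where Y: "Y \<in> Acal E tail head t r" "edge_cut E tail head Y t xi"
      using L.reduce[OF xiE mc assms(6)] by blast
    obtain w where w: "matches w Y"
      "\<forall>ee\<in>E. head ee = t \<longrightarrow> (\<Sum>b\<in>E. z b * F ee (Inr b)) = (\<Sum>b\<in>E. w b * F ee (Inr b))"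
      using L.push[OF Y(2) xiE xi(2)] by blast
    have "w \<in> Zcal (Acal E tail head t r)" unfolding Zcal_def using Y(1) w(1) by blast
    moreover have "received \<omega> E head F t x z = received \<omega> E head F t x w" for x
      unfolding received_def using w(2) by (auto intro!: ext)
    ultimately show ?thesis by blast
  qed
  show ?thesis
  proof
    assume cA: "corrects \<omega> E head F t (Zcal (Acal E tail head t r))"
    show "corrects \<omega> E head F t (Zcal (Ecal E tail head t r))" unfolding corrects_def
    proof (intro allI impI)
      fix x x' z z'
      assume H: "(\<forall>i\<ge>\<omega>. x i = 0) \<and> (\<forall>i\<ge>\<omega>. x' i = 0) \<and> z \<in> Zcal (Ecal E tail head t r) \<and>
        z' \<in> Zcal (Ecal E tail head t r) \<and> received \<omega> E head F t x z = received \<omega> E head F t x' z'"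
      obtain w where w: "w \<in> Zcal (Acal E tail head t r)" "\<forall>x. received \<omega> E head F t x z = received \<omega> E head F t x w"
        using red H by blast
      obtain w' where w': "w' \<in> Zcal (Acal E tail head t r)" "\<forall>x. received \<omega> E head F t x z' = received \<omega> E head F t x w'"
        using red H by blast
      have "received \<omega> E head F t x w = received \<omega> E head F t x' w'" using H w(2) w'(2) by simp
      then show "x = x'" using cA H w(1) w'(1) unfolding corrects_def by blast
    qed
  next
    assume cE: "corrects \<omega> E head F t (Zcal (Ecal E tail head t r))"
    show "corrects \<omega> E head F t (Zcal (Acal E tail head t r))"
      using corrects_mono[OF Zcal_mono[OF AE] cE] .
  qed
qed

end
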